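(* Let $\{a_n,n\ge1\}$ be a sequence of positive real numbers such that $a_n\to\infty$ and $a_n/a_{n-1}\to1$ as $n\to\infty$. Let $S_n=\sum_{i=1}^na_i$ and $S_{2,n}=\sum_{i=1}^na_i^2$. Then $a_n/S_n\to0$ and $S_{2,n}/S_n^2\to0$ as $n\to\infty$. *)

theory Defs
  imports Complex_Main
begin

end

theory Submission
  imports Defs
begin

theorem lemmaA1:
  fixes a :: "nat \<Rightarrow> real"
  assumes pos: "\<And>n. n \<ge> 1 \<Longrightarrow> a n > 0"
    and infty: "filterlim a at_top sequentially"
    and ratio: "(\<lambda>n. a n / a (n - 1)) \<longlonglongrightarrow> 1"
  shows "(\<lambda>n. a n / (\<Sum>i=1..n. a i)) \<longlonglongrightarrow> 0 \<and>
         ((\<lambda>n. (\<Sum>i=1..n. (a i)\<^sup>2) / (\<Sum>i=1..n. a i)\<^sup>2) \<longlonglongrightarrow> 0)"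
proof -
  define S where "S n = (\<Sum>i=1..n. a i)" for n
  have nn: "\<And>i. i \<in> {1..n} \<Longrightarrow> 0 \<le> a i" for n using pos by (simp add: less_imp_le)
  have Smono: "S i \<le> S n" if "i \<le> n" for i n
    unfolding S_def by (rule sum_mono2) (use that nn in auto)
  have aS: "a n \<le> S n" if "n \<ge> 1" for n
  proof -
    have "(\<Sum>i\<in>{n}. a i) \<le> S n" unfolding S_def
      by (rule sum_mono2) (use that nn in auto)
    thus ?thesis by simp
  qed
  have q: "(\<lambda>n. a (n-1) / a n) \<longlonglongrightarrow> 1"
    using tendsto_inverse[OF ratio] by simp
  have r: "(\<lambda>n. a (n-j) / a n) \<longlonglongrightarrow> 1" for j
  proof (induction j)
    case 0
    have "eventually (\<lambda>n. 1 = a (n-0) / a n) sequentially"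
      using eventually_ge_at_top[of 1] by eventually_elim (use pos in force)
    thus ?case by (rule Lim_transform_eventually[OF tendsto_const])
  next
    case (Suc j)
    have q': "(\<lambda>n. a (n-j-1) / a (n-j)) \<longlonglongrightarrow> 1"
      using filterlim_compose[OF q filterlim_minus_const_nat_at_top[of j]] by (simp add: o_def)
    have "(\<lambda>n. a (n-j-1) / a (n-j) * (a (n-j) / a n)) \<longlonglongrightarrow> 1 * 1"
      by (rule tendsto_mult[OF q' Suc.IH])
    moreover have "eventually (\<lambda>n. a (n-j-1) / a (n-j) * (a (n-j) / a n) = a (n - Suc j) / a n) sequentially"
      using eventually_ge_at_top[of "j+1"] proof eventually_elim
      case (elim n)
      then have "n - j \<ge> 1" by simp
      then have "a (n-j) \<noteq> 0" using pos[of "n-j"] by simp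
      have e: "n - Suc j = n - j - 1" by simp
      show ?case unfolding e using \<open>a (n-j) \<noteq> 0\<close> by simp
    qed
    ultimately have "(\<lambda>n. a (n - Suc j) / a n) \<longlonglongrightarrow> 1 * 1" by (rule Lim_transform_eventually)
    thus ?case by simp
  qed
  have part1: "(\<lambda>n. a n / S n) \<longlonglongrightarrow> 0"
  proof (rule LIMSEQ_I)
    fix e :: real assume e: "0 < e"
    define K where "K = nat \<lceil>2/e\<rceil> + 1"
    have K1: "K \<ge> 1" unfolding K_def by simp
    have Kbig: "real K > 2/e" unfolding K_def by linarith
    have "(\<lambda>n. \<Sum>j<K. a (n-j) / a n) \<longlonglongrightarrow> (\<Sum>j<K. 1)"
      by (rule tendsto_sum) (use r in auto)
    hence "(\<lambda>n. \<Sum>j<K. a (n-j) / a n) \<longlonglongrightarrow> real K" by simp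
    from LIMSEQ_D[OF this, of "real K / 2"] K1 obtain N1 where
      N1: "\<forall>n\<ge>N1. norm ((\<Sum>j<K. a (n-j) / a n) - real K) < real K / 2" by auto
    show "\<exists>no. \<forall>n\<ge>no. norm (a n / S n - 0) < e"
    proof (intro exI allI impI)
      fix n assume n: "n \<ge> max N1 K"
      hence n1: "n \<ge> 1" using K1 by simp
      have an: "a n > 0" using pos n1 by simp
      have hs: "(\<Sum>j<K. a (n-j) / a n) > real K / 2"
      proof -
        have "norm ((\<Sum>j<K. a (n-j) / a n) - real K) < real K / 2" using N1 n by simp
        thus ?thesis unfolding real_norm_def abs_less_iff by linarith
      qed
      have inj: "inj_on (\<lambda>j. n - j) {..<K}" using n by (auto simp: inj_on_def)
      have "(\<Sum>j<K. a (n-j)) = sum a ((\<lambda>j. n - j) ` {..<K})"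
        by (simp add: sum.reindex[OF inj])
      also have "\<dots> \<le> S n" unfolding S_def
        by (rule sum_mono2) (use n nn in auto)
      finally have "(\<Sum>j<K. a (n-j)) \<le> S n" .
      moreover have "(\<Sum>j<K. a (n-j)) = a n * (\<Sum>j<K. a (n-j) / a n)"
        using an by (simp add: sum_distrib_left)
      moreover have "a n * (real K / 2) < a n * (\<Sum>j<K. a (n-j) / a n)"
        using hs an by (rule mult_strict_left_mono)
      ultimately have SK: "S n \<ge> a n * (real K / 2)" by linarith
      moreover have "a n * (real K / 2) > 0" using an K1 by simp
      ultimately have Spos: "S n > 0" by linarith
      have "a n / S n \<le> a n / (a n * (real K / 2))"
        by (rule divide_left_mono) (use SK an K1 Spos in auto)
      also have "\<dots> = 2 / real K" using an by simp
      also have "\<dots> < e" using Kbig e K1 by (simp add: divide_less_eq mult.commute)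
      finally show "norm (a n / S n - 0) < e" using an Spos by simp
    qed
  qed
  have Sinf: "filterlim S at_top sequentially"
    by (rule filterlim_at_top_mono[OF infty]) (use aS in \<open>auto simp: eventually_sequentially\<close>)
  have part2: "(\<lambda>n. (\<Sum>i=1..n. (a i)\<^sup>2) / (S n)\<^sup>2) \<longlonglongrightarrow> 0"
  proof (rule LIMSEQ_I)
    fix e :: real assume e: "0 < e"
    from LIMSEQ_D[OF part1, of "e/2"] e obtain N0 where
      N0: "\<forall>n\<ge>N0. norm (a n / S n - 0) < e/2" by auto
    define N where "N = max N0 1"
    have "\<forall>\<^sub>F n in sequentially. S n > 2 * S N / e"
      using Sinf by (simp add: filterlim_at_top_dense)
    then obtain N2 where N2: "\<forall>n\<ge>N2. S n > 2 * S N / e" by (auto simp: eventually_sequentially)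
    show "\<exists>no. \<forall>n\<ge>no. norm ((\<Sum>i=1..n. (a i)\<^sup>2) / (S n)\<^sup>2 - 0) < e"
    proof (intro exI allI impI)
      fix n assume n: "n \<ge> max N N2"
      have SN: "S N \<ge> 0" using aS[of N] pos[of N] unfolding N_def by simp
      have Sn: "S n > 0" using N2 n SN e
        by (smt (verit) divide_nonneg_pos max.bounded_iff)
      have bound: "a i \<le> e/2 * S n + S N" if i: "i \<in> {1..n}" for i
      proof (cases "i \<le> N")
        case True
        have "a i \<le> S i" using aS i by simp
        also have "\<dots> \<le> S N" using Smono True by simp
        moreover have "e/2 * S n \<ge> 0" using e Sn by simp
        ultimately show ?thesis by linarith
      next
        case False
        have ai: "a i > 0" using pos i by simp
        have Si: "S i > 0" using aS[of i] ai i by simp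
        have "i \<ge> N0" using False unfolding N_def by simp
        hence "norm (a i / S i - 0) < e/2" using N0 by blast
        hence "a i / S i < e/2" using ai Si by simp
        hence "a i < e/2 * S i" using Si by (simp add: divide_less_eq)
        also have "\<dots> \<le> e/2 * S n" using Smono[of i n] i e by simp
        finally show ?thesis using SN by simp
      qed
      have "(\<Sum>i=1..n. (a i)\<^sup>2) \<le> (\<Sum>i=1..n. a i * (e/2 * S n + S N))"
        by (rule sum_mono) (use bound nn in \<open>auto simp: power2_eq_square intro: mult_left_mono\<close>)
      also have "\<dots> = S n * (e/2 * S n + S N)" unfolding S_def by (simp add: sum_distrib_right)
      finally have le: "(\<Sum>i=1..n. (a i)\<^sup>2) \<le> S n * (e/2 * S n + S N)" .
      have "S N < e/2 * S n" using N2 n e by (simp add: divide_less_eq mult.commute)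
      hence "S n * (e/2 * S n + S N) < S n * (e * S n)" using Sn
        by (simp add: mult_strict_left_mono)
      moreover have "S n * (e * S n) = e * (S n)\<^sup>2" by (simp add: power2_eq_square)
      ultimately have "(\<Sum>i=1..n. (a i)\<^sup>2) < e * (S n)\<^sup>2" using le by linarith
      moreover have "(\<Sum>i=1..n. (a i)\<^sup>2) \<ge> 0" by (simp add: sum_nonneg)
      ultimately show "norm ((\<Sum>i=1..n. (a i)\<^sup>2) / (S n)\<^sup>2 - 0) < e" using Sn
        by (simp add: divide_less_eq)
    qed
  qed
  show ?thesis using part1 part2 unfolding S_def by simp
qed

end
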